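(* Let $\varphi$ be a finite conjunction of literals of the two forms $x\in y$ and $x = y\setminus z$ (with $x,y,z$ set variables), and let $\mathrm{Vars}(\varphi)$ be its finite set of variables. Let $M$ be a set assignment over $\mathrm{Vars}(\varphi)$ satisfying $\varphi$; let $\bar x,\bar y\in\mathrm{Vars}(\varphi)$, let $\overline{M}$ be a set assignment over $\mathrm{Vars}(\varphi)$ satisfying $\varphi$ with $\overline{M}\bar x\neq \overline{M}\bar y$, and let $\mathfrak{t}$ be a set belonging to exactly one of $\overline{M}\bar x$, $\overline{M}\bar y$. Fix a set $\mathfrak{s}$ with $\mathrm{rk}(\mathfrak{s})>\mathrm{rk}(M)$. Define $\mathsf{V}_n\subseteq \mathrm{Vars}(\varphi)$ and set assignments $M_n$ over $\mathrm{Vars}(\varphi)$ as follows: $\mathsf{V}_0=\{u\in\mathrm{Vars}(\varphi)\mid \mathfrak{t}\in\overline{M}u\}$; $\mathsf{V}_n=\{u\in\mathrm{Vars}(\varphi)\mid Mu\cap\{Mw\mid w\in\mathsf{V}_{n-1}\}\neq\emptyset\}$ for $n\ge1$; $M_0v=Mv\cup\{\mathfrak{s}\}$ if $v\in\mathsf{V}_0$ and $M_0v=Mv$ otherwise; for $n\ge1$, $M_nv=M_{n-1}v\cup\{M_{n-1}u\mid u\in\mathsf{V}_{n-1},\ Mu\in Mv\}$ if $v\in\mathsf{V}_n$ and $M_nv=M_{n-1}v$ otherwise. Then: (a) for every $v\in\mathrm{Vars}(\varphi)$, $Mv\subseteq M_0v\subseteq M_1v\subseteq\cdots\subseteq M_nv\subseteq\cdots$;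 (b) for all $v\in\mathrm{Vars}(\varphi)$ and $n\in\mathbb{N}$, $M_nv\subseteq Mv\cup\{\mathfrak{s}\}\cup\bigcup_{k=0}^{n-1}\{M_ku\mid u\in\mathsf{V}_k,\ Mu\in Mv\}$.
   Context: A set assignment is a map from a finite set of set variables into the von Neumann universe $\mathcal{V}=\bigcup_\alpha\mathcal{V}_\alpha$, $\mathcal{V}_\alpha=\bigcup_{\beta<\alpha}\mathcal{P}(\mathcal{V}_\beta)$; it satisfies $x\in y$ iff $Mx\in My$ and $x=y\setminus z$ iff $Mx=My\setminus Mz$. The rank $\mathrm{rk}(s)$ of a set $s$ is the least ordinal $\alpha$ with $s\subseteq\mathcal{V}_\alpha$, and $\mathrm{rk}(M)=\max\{\mathrm{rk}(Mx)\mid x\in\mathrm{dom}(M)\}$. *)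

theory Defs
  imports Main
begin

text \<open>We model it abstractly:
  a type 'a of "sets" together with its membership interpretation elts :: 'a => 'a set,
  required to satisfy extensionality, foundation and the closure properties of ZF that
  are relevant (separation, finite sets, binary union, union, power set).
  The theorem is stated for every such universe (V itself is one).\<close>

definition set_universe :: "('a \<Rightarrow> 'a set) \<Rightarrow> bool" where
  "set_universe elts \<longleftrightarrow>
     inj elts \<and>
     wf {(y, x). y \<in> elts x} \<and>
     (\<forall>x A. A \<subseteq> elts x \<longrightarrow> A \<in> range elts) \<and>
     (\<forall>F. finite F \<longrightarrow> F \<in> range elts) \<and>
     (\<forall>x y. elts x \<union> elts y \<in> range elts) \<and>
     (\<forall>x. \<Union> (elts ` elts x) \<in> range elts) \<and>
     (\<forall>x. {z. elts z \<subseteq> elts x} \<in> range elts)"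

definition mk :: "('a \<Rightarrow> 'a set) \<Rightarrow> 'a set \<Rightarrow> 'a" where
  "mk elts A = inv elts A"

definition succ :: "('a \<Rightarrow> 'a set) \<Rightarrow> 'a \<Rightarrow> 'a" where
  "succ elts a = mk elts (elts a \<union> {a})"

text \<open>von Neumann rank, as an ordinal of the universe: rk(x) = sup { rk(y)+1 | y in x },
  which coincides with the least alpha such that x is a subset of V_alpha.\<close>
definition rank :: "('a \<Rightarrow> 'a set) \<Rightarrow> 'a \<Rightarrow> 'a" where
  "rank elts = wfrec {(y, x). y \<in> elts x}
     (\<lambda>r x. mk elts (\<Union>y\<in>elts x. elts (succ elts (r y))))"

text \<open>Ordinal comparison rk(a) < rk(b) is membership between von Neumann ordinals.\<close>
definition rank_less :: "('a \<Rightarrow> 'a set) \<Rightarrow> 'a \<Rightarrow> 'a \<Rightarrow> bool" where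
  "rank_less elts a b \<longleftrightarrow> rank elts a \<in> elts (rank elts b)"

datatype 'v lit = Mem 'v 'v | Diff 'v 'v 'v

fun lit_vars :: "'v lit \<Rightarrow> 'v set" where
  "lit_vars (Mem x y) = {x, y}"
| "lit_vars (Diff x y z) = {x, y, z}"

definition Vars :: "'v lit list \<Rightarrow> 'v set" where
  "Vars phi = (\<Union>l\<in>set phi. lit_vars l)"

fun holds_lit :: "('a \<Rightarrow> 'a set) \<Rightarrow> ('v \<Rightarrow> 'a) \<Rightarrow> 'v lit \<Rightarrow> bool" where
  "holds_lit elts M (Mem x y) \<longleftrightarrow> M x \<in> elts (M y)"
| "holds_lit elts M (Diff x y z) \<longleftrightarrow> M x = mk elts (elts (M y) - elts (M z))"

definition satisfies :: "('a \<Rightarrow> 'a set) \<Rightarrow> ('v \<Rightarrow> 'a) \<Rightarrow> 'v lit list \<Rightarrow> bool" where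
  "satisfies elts M phi \<longleftrightarrow> (\<forall>l\<in>set phi. holds_lit elts M l)"

text \<open>rk(M) < rk(s), where rk(M) is the max of the ranks of the values of M on Vars.\<close>
definition rank_assign_less :: "('a \<Rightarrow> 'a set) \<Rightarrow> 'v set \<Rightarrow> ('v \<Rightarrow> 'a) \<Rightarrow> 'a \<Rightarrow> bool" where
  "rank_assign_less elts Vs M s \<longleftrightarrow> (\<forall>v\<in>Vs. rank_less elts (M v) s)"

fun Vseq :: "('a \<Rightarrow> 'a set) \<Rightarrow> 'v set \<Rightarrow> ('v \<Rightarrow> 'a) \<Rightarrow> ('v \<Rightarrow> 'a) \<Rightarrow> 'a \<Rightarrow> nat \<Rightarrow> 'v set" where
  "Vseq elts Vs M Mbar t 0 = {u\<in>Vs. t \<in> elts (Mbar u)}"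
| "Vseq elts Vs M Mbar t (Suc n) =
     {u\<in>Vs. elts (M u) \<inter> M ` Vseq elts Vs M Mbar t n \<noteq> {}}"

fun Mseq :: "('a \<Rightarrow> 'a set) \<Rightarrow> 'v set \<Rightarrow> ('v \<Rightarrow> 'a) \<Rightarrow> ('v \<Rightarrow> 'a) \<Rightarrow> 'a \<Rightarrow> 'a
              \<Rightarrow> nat \<Rightarrow> 'v \<Rightarrow> 'a" where
  "Mseq elts Vs M Mbar t s 0 v =
     (if v \<in> Vseq elts Vs M Mbar t 0 then mk elts (elts (M v) \<union> {s}) else M v)"
| "Mseq elts Vs M Mbar t s (Suc n) v =
     (if v \<in> Vseq elts Vs M Mbar t (Suc n)
      then mk elts (elts (Mseq elts Vs M Mbar t s n v) \<union>
             {Mseq elts Vs M Mbar t s n u | u. u \<in> Vseq elts Vs M Mbar t n \<and> M u \<in> elts (M v)})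
      else Mseq elts Vs M Mbar t s n v)"

end

theory Submission
  imports Defs
begin

lemma elts_mk_union:
  assumes U: "set_universe elts" and F: "finite F"
  shows "elts (mk elts (elts x \<union> F)) = elts x \<union> F"
proof -
  have inj: "inj elts" and fr: "\<And>F. finite F \<Longrightarrow> F \<in> range elts"
    and un: "\<And>x y. elts x \<union> elts y \<in> range elts"
    using U unfolding set_universe_def by auto
  obtain y where y: "F = elts y" using fr[OF F] by auto
  obtain z where z: "elts x \<union> elts y = elts z" using un[of x y] by auto
  have "inv elts (elts z) = z" using inj by simp
  then show ?thesis using y z unfolding mk_def by simp
qed

lemma set_comb: "P \<subseteq> Q \<Longrightarrow> Z \<subseteq> Q \<Longrightarrow> X \<subseteq> Y \<union> Z \<Longrightarrow> Y \<subseteq> A \<union> P \<Longrightarrow> X \<subseteq> A \<union> Q"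
  by blast

lemma finite_Vars: "finite (Vars phi)"
proof -
  have "finite (lit_vars l)" for l :: "'v lit" by (cases l) auto
  then show ?thesis unfolding Vars_def by auto
qed

lemma Vseq_sub: "Vseq elts Vs M Mbar t n \<subseteq> Vs"
  by (cases n) auto

theorem lemma2:
  fixes elts :: "'a \<Rightarrow> 'a set"
    and phi :: "'v lit list"
    and M Mbar :: "'v \<Rightarrow> 'a"
    and xb yb :: 'v
    and t s :: 'a
  assumes U: "set_universe elts"
    and satM: "satisfies elts M phi"
    and xb: "xb \<in> Vars phi" and yb: "yb \<in> Vars phi"
    and satMbar: "satisfies elts Mbar phi"
    and neq: "Mbar xb \<noteq> Mbar yb"
    and t: "(t \<in> elts (Mbar xb)) \<noteq> (t \<in> elts (Mbar yb))"
    and rk: "rank_assign_less elts (Vars phi) M s"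
  shows "(\<forall>v\<in>Vars phi.
           elts (M v) \<subseteq> elts (Mseq elts (Vars phi) M Mbar t s 0 v) \<and>
           (\<forall>n. elts (Mseq elts (Vars phi) M Mbar t s n v)
                 \<subseteq> elts (Mseq elts (Vars phi) M Mbar t s (Suc n) v))) \<and>
         (\<forall>v\<in>Vars phi. \<forall>n.
           elts (Mseq elts (Vars phi) M Mbar t s n v) \<subseteq>
             elts (M v) \<union> {s} \<union>
             (\<Union>k<n. {Mseq elts (Vars phi) M Mbar t s k u | u.
                        u \<in> Vseq elts (Vars phi) M Mbar t k \<and> M u \<in> elts (M v)}))"
proof -
  let ?Vs = "Vars phi"
  let ?M = "Mseq elts ?Vs M Mbar t s"
  let ?V = "Vseq elts ?Vs M Mbar t"
  have fin: "finite {?M n u | u. u \<in> ?V n \<and> M u \<in> elts (M v)}" for n v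
  proof -
    have "{?M n u | u. u \<in> ?V n \<and> M u \<in> elts (M v)} \<subseteq> ?M n ` ?Vs"
      using Vseq_sub[of elts ?Vs M Mbar t n] by auto
    then show ?thesis using finite_Vars finite_subset by blast
  qed
  have e0: "elts (?M 0 v) = (if v \<in> ?V 0 then elts (M v) \<union> {s} else elts (M v))" for v
    using elts_mk_union[OF U, of "{s}" "M v"] by simp
  have eS: "elts (?M (Suc n) v) = (if v \<in> ?V (Suc n) then elts (?M n v) \<union>
      {?M n u | u. u \<in> ?V n \<and> M u \<in> elts (M v)} else elts (?M n v))" for n v
    using elts_mk_union[OF U, OF fin[of n v], of "?M n v"] by (simp only: Mseq.simps) auto
  have A: "elts (M v) \<subseteq> elts (?M 0 v)" for v using e0[of v] by auto
  have B: "elts (?M n v) \<subseteq> elts (?M (Suc n) v)" for n v using eS[of n v] by auto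
  have C: "elts (?M n v) \<subseteq> elts (M v) \<union> {s} \<union>
             (\<Union>k<n. {?M k u | u. u \<in> ?V k \<and> M u \<in> elts (M v)})" for n v
  proof (induction n)
    case 0
    then show ?case using e0[of v] by auto
  next
    case (Suc n)
    have "(\<Union>k<n. {?M k u | u. u \<in> ?V k \<and> M u \<in> elts (M v)}) \<subseteq>
          (\<Union>k<Suc n. {?M k u | u. u \<in> ?V k \<and> M u \<in> elts (M v)})" by (intro UN_mono) auto
    moreover have "{?M n u | u. u \<in> ?V n \<and> M u \<in> elts (M v)} \<subseteq>
          (\<Union>k<Suc n. {?M k u | u. u \<in> ?V k \<and> M u \<in> elts (M v)})" by blast
    moreover have "elts (?M (Suc n) v) \<subseteq> elts (?M n v) \<union>
          {?M n u | u. u \<in> ?V n \<and> M u \<in> elts (M v)}"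
      using eS[of n v] by (cases "v \<in> ?V (Suc n)") simp_all
    ultimately show ?case using Suc.IH by (rule set_comb)
  qed
  show ?thesis
  proof (intro conjI ballI allI)
    fix v n show "elts (M v) \<subseteq> elts (?M 0 v)" by (rule A)
  next
    fix v n show "elts (?M n v) \<subseteq> elts (?M (Suc n) v)" by (rule B)
  next
    fix v n show "elts (?M n v) \<subseteq> elts (M v) \<union> {s} \<union>
             (\<Union>k<n. {?M k u | u. u \<in> ?V k \<and> M u \<in> elts (M v)})" by (rule C)
  qed
qed

end
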